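(* Let the loss $f(\cdot,z)$ be convex and $\beta$-smooth for all $z\in\mathcal{Z}$. Consider full-batch GD with $T$ iterations and learning rates $\eta_t\le1/(2\beta)$ for all $t\le T+1$. Then $$|\epsilon_{\mathrm{gen}}|\le\frac{4\sqrt{2\beta(\epsilon_{\mathrm{opt}}+\epsilon_{\mathbf{c}})\,\epsilon_{\mathrm{path}}}}{n}\sqrt{\sum_{t=1}^T\eta_t}+8\beta\frac{\epsilon_{\mathrm{path}}}{n^2}\sum_{t=1}^T\eta_t .$$
   Context: Let $\mathcal{D}$ be a distribution on $\mathcal{Z}$ and $z_1,\dots,z_n$ i.i.d. from $\mathcal{D}$; $S=(z_1,\dots,z_n)$. The loss $f:\mathbb{R}^d\times\mathcal{Z}\to[0,\infty)$ is non-negative; $\beta$-smooth means $\|\nabla f(w,z)-\nabla f(u,z)\|_2\le\beta\|w-u\|_2$. $R(w)=\mathbb{E}_{Z\sim\mathcal{D}}[f(w,Z)]$, $R_S(w)=\frac1n\sum_j f(w,z_j)$, $W^*_S$ a minimizer of $R_S$ (assumed to exist). Full-batch GD: from a fixed $W_1$, $W_{t+1}=W_t-\frac{\eta_t}{n}\sum_{j=1}^n\nabla f(W_t,z_j)$, $t=1,\dots,T$, output $A(S)=W_{T+1}$. Definitions: $\epsilon_{\mathrm{gen}}=\mathbb{E}[R(A(S))-R_S(A(S))]$; $\epsilon_{\mathrm{opt}}=\mathbb{E}[R_S(A(S))-R_S(W^*_S)]$; $\epsilon_{\mathbf{c}}=\mathbb{E}[R_S(W^*_S)]$; $\epsilon_{\mathrm{path}}=\sum_{t=1}^T\eta_t\mathbb{E}[\|\nabla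 f(W_t,z_i)\|_2^2]$ for a fixed index $i$. *)

theory Defs
  imports "HOL-Probability.Probability"
begin

definition pop_risk :: "'z measure \<Rightarrow> ('w \<Rightarrow> 'z \<Rightarrow> real) \<Rightarrow> 'w \<Rightarrow> real" where
  "pop_risk D f w = (\<integral>z. f w z \<partial>D)"

definition emp_risk :: "nat \<Rightarrow> ('w \<Rightarrow> 'z \<Rightarrow> real) \<Rightarrow> (nat \<Rightarrow> 'z) \<Rightarrow> 'w \<Rightarrow> real" where
  "emp_risk n f S w = (\<Sum>j<n. f w (S j)) / real n"

text \<open>A minimizer W*_S of R_S (chosen by Hilbert choice; existence is assumed in the theorem).\<close>
definition emp_minimizer :: "nat \<Rightarrow> ('w \<Rightarrow> 'z \<Rightarrow> real) \<Rightarrow> (nat \<Rightarrow> 'z) \<Rightarrow> 'w" where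
  "emp_minimizer n f S = (SOME w. \<forall>u. emp_risk n f S w \<le> emp_risk n f S u)"

text \<open>Full-batch GD, 0-based auxiliary iteration: gd_aux .. k = W_{k+1}.
  g w z is the gradient of f(.,z) at w; eta is indexed from 1.\<close>
primrec gd_aux :: "nat \<Rightarrow> ('w::real_vector \<Rightarrow> 'z \<Rightarrow> 'w) \<Rightarrow> (nat \<Rightarrow> real) \<Rightarrow> 'w \<Rightarrow> (nat \<Rightarrow> 'z) \<Rightarrow> nat \<Rightarrow> 'w" where
  "gd_aux n g eta W1 S 0 = W1"
| "gd_aux n g eta W1 S (Suc k) =
     gd_aux n g eta W1 S k - (eta (Suc k) / real n) *\<^sub>R (\<Sum>j<n. g (gd_aux n g eta W1 S k) (S j))"

definition gd_iter :: "nat \<Rightarrow> ('w::real_vector \<Rightarrow> 'z \<Rightarrow> 'w) \<Rightarrow> (nat \<Rightarrow> real) \<Rightarrow> 'w \<Rightarrow> (nat \<Rightarrow> 'z) \<Rightarrow> nat \<Rightarrow> 'w" where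
  "gd_iter n g eta W1 S t = gd_aux n g eta W1 S (t - 1)"

definition gd_out :: "nat \<Rightarrow> ('w::real_vector \<Rightarrow> 'z \<Rightarrow> 'w) \<Rightarrow> (nat \<Rightarrow> real) \<Rightarrow> 'w \<Rightarrow> nat \<Rightarrow> (nat \<Rightarrow> 'z) \<Rightarrow> 'w" where
  "gd_out n g eta W1 T S = gd_iter n g eta W1 S (T + 1)"

definition sample_measure :: "nat \<Rightarrow> 'z measure \<Rightarrow> (nat \<Rightarrow> 'z) measure" where
  "sample_measure n D = PiM {..<n} (\<lambda>_. D)"

definition eps_gen where
  "eps_gen n D f g eta W1 T =
     (\<integral>S. pop_risk D f (gd_out n g eta W1 T S) - emp_risk n f S (gd_out n g eta W1 T S) \<partial>sample_measure n D)"

definition eps_opt where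
  "eps_opt n D f g eta W1 T =
     (\<integral>S. emp_risk n f S (gd_out n g eta W1 T S) - emp_risk n f S (emp_minimizer n f S) \<partial>sample_measure n D)"

definition eps_c where
  "eps_c n D f = (\<integral>S. emp_risk n f S (emp_minimizer n f S) \<partial>sample_measure n D)"

definition eps_path where
  "eps_path n D g eta W1 T i =
     (\<Sum>t=1..T. eta t * (\<integral>S. (norm (g (gd_iter n g eta W1 S t) (S i)))\<^sup>2 \<partial>sample_measure n D))"

end

theory Submission
  imports Defs
begin


lemma first_order:
  fixes h :: "'w::euclidean_space \<Rightarrow> real"
  assumes hd: "GDERIV h w :> G" and hc: "convex_on UNIV h"
  shows "h w + inner G (u - w) \<le> h u"
proof -
  define d where "d = u - w"
  define \<phi> where "\<phi> = (\<lambda>s::real. h (w + s *\<^sub>R d))"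
  have conv: "convex_on UNIV \<phi>"
  proof (rule convex_onI)
    fix t x y :: real assume t: "0 < t" "t < 1"
    have "w + ((1 - t) *\<^sub>R x + t *\<^sub>R y) *\<^sub>R d = (1 - t) *\<^sub>R (w + x *\<^sub>R d) + t *\<^sub>R (w + y *\<^sub>R d)"
      by (simp add: algebra_simps)
    then show "\<phi> ((1 - t) *\<^sub>R x + t *\<^sub>R y) \<le> (1 - t) * \<phi> x + t * \<phi> y"
      unfolding \<phi>_def using convex_onD[OF hc, of t "w + x *\<^sub>R d" "w + y *\<^sub>R d"] t by simp
  qed simp
  have d1: "((\<lambda>s::real. w + s *\<^sub>R d) has_derivative (\<lambda>s. s *\<^sub>R d)) (at 0)"
    by (auto intro!: derivative_eq_intros)
  have hd': "(h has_derivative (\<lambda>x. inner x G)) (at (w + 0 *\<^sub>R d))"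
    using hd by (simp add: gderiv_def)
  have "(\<phi> has_derivative (\<lambda>s. inner (s *\<^sub>R d) G)) (at 0)"
    unfolding \<phi>_def using has_derivative_compose[OF d1 hd'] by (simp add: o_def)
  then have "(\<phi> has_field_derivative inner d G) (at 0)"
  proof -
    have e: "(\<lambda>s. s * (d \<bullet> G)) = (*) (d \<bullet> G)" by (auto simp: mult.commute)
    show ?thesis using \<open>(\<phi> has_derivative _) _\<close> by (simp add: has_field_derivative_def e)
  qed
  then have "(\<phi> has_field_derivative inner d G) (at 0 within UNIV)" by simp
  from convex_on_imp_above_tangent[OF conv _ _ _ this, of 1]
  have "\<phi> 1 - \<phi> 0 \<ge> inner d G * (1 - 0)" by simp
  then show ?thesis unfolding \<phi>_def d_def by (simp add: inner_commute)
qed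

lemma descent:
  fixes h :: "'w::euclidean_space \<Rightarrow> real"
  assumes hd: "\<And>w. GDERIV h w :> G w" and hc: "convex_on UNIV h"
    and hL: "\<And>w u. norm (G w - G u) \<le> L * norm (w - u)"
  shows "h u \<le> h w + inner (G w) (u - w) + L * (norm (u - w))\<^sup>2"
proof -
  have 1: "h u + inner (G u) (w - u) \<le> h w" by (rule first_order[OF hd hc])
  have "inner (G u - G w) (u - w) \<le> norm (G u - G w) * norm (u - w)" by (rule norm_cauchy_schwarz)
  also have "\<dots> \<le> L * norm (u - w) * norm (u - w)" by (rule mult_right_mono[OF hL]) simp
  finally have 2: "inner (G u - G w) (u - w) \<le> L * (norm (u - w))\<^sup>2" by (simp add: power2_eq_square)
  have "inner (G u) (w - u) = - inner (G w) (u - w) - inner (G u - G w) (u - w)"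
    by (simp add: inner_diff_left inner_diff_right)
  with 1 2 show ?thesis by linarith
qed

lemma cocoercive_aux:
  fixes h :: "'w::euclidean_space \<Rightarrow> real"
  assumes hd: "\<And>w. GDERIV h w :> G w" and hc: "convex_on UNIV h"
    and hL: "\<And>w u. norm (G w - G u) \<le> L * norm (w - u)" and L: "L > 0"
  shows "(norm (G u - G w))\<^sup>2 / (4 * L) \<le> h u - h w - inner (G w) (u - w)"
proof -
  define \<Delta> where "\<Delta> = G u - G w"
  define c where "c = 1 / (2 * L)"
  define v where "v = u - c *\<^sub>R \<Delta>"
  have a: "h v \<le> h u + inner (G u) (v - u) + L * (norm (v - u))\<^sup>2" by (rule descent[OF hd hc hL])
  have b: "h w + inner (G w) (v - w) \<le> h v" by (rule first_order[OF hd hc])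
  have e1: "inner (G w) (v - w) = inner (G w) (u - w) - c * inner (G w) \<Delta>"
    by (simp add: v_def inner_diff_right algebra_simps)
  have e2: "inner (G u) (v - u) = - c * inner (G u) \<Delta>" by (simp add: v_def)
  have e3: "(norm (v - u))\<^sup>2 = c\<^sup>2 * (norm \<Delta>)\<^sup>2" by (simp add: v_def power_mult_distrib)
  have e4: "inner (G u) \<Delta> - inner (G w) \<Delta> = (norm \<Delta>)\<^sup>2"
    by (simp add: \<Delta>_def power2_norm_eq_inner inner_diff_left)
  have "h w + inner (G w) (u - w) + c * (inner (G u) \<Delta> - inner (G w) \<Delta>) - L * c\<^sup>2 * (norm \<Delta>)\<^sup>2 \<le> h u"
    using a b e1 e2 e3 by (simp add: algebra_simps)
  then have "h w + inner (G w) (u - w) + (c - L * c\<^sup>2) * (norm \<Delta>)\<^sup>2 \<le> h u"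
    using e4 by (simp add: algebra_simps)
  moreover have "c - L * c\<^sup>2 = 1 / (4 * L)" using L by (simp add: c_def power2_eq_square field_simps)
  ultimately show ?thesis by (simp add: \<Delta>_def)
qed

lemma cocoercive:
  fixes h :: "'w::euclidean_space \<Rightarrow> real"
  assumes hd: "\<And>w. GDERIV h w :> G w" and hc: "convex_on UNIV h"
    and hL: "\<And>w u. norm (G w - G u) \<le> L * norm (w - u)" and L: "L > 0"
  shows "(norm (G w - G u))\<^sup>2 / (2 * L) \<le> inner (G w - G u) (w - u)"
proof -
  have 1: "(norm (G u - G w))\<^sup>2 / (4 * L) \<le> h u - h w - inner (G w) (u - w)"
    by (rule cocoercive_aux[OF hd hc hL L])
  have 2: "(norm (G w - G u))\<^sup>2 / (4 * L) \<le> h w - h u - inner (G u) (w - u)"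
    by (rule cocoercive_aux[OF hd hc hL L])
  have 3: "norm (G u - G w) = norm (G w - G u)" by (rule norm_minus_commute)
  have 4: "inner (G w - G u) (w - u) = - inner (G w) (u - w) - inner (G u) (w - u)"
    by (simp add: inner_diff_left inner_diff_right algebra_simps)
  have "(norm (G w - G u))\<^sup>2 / (2 * L) = (norm (G w - G u))\<^sup>2 / (4 * L) + (norm (G w - G u))\<^sup>2 / (4 * L)"
    by (simp add: field_simps)
  moreover from 1 have "(norm (G w - G u))\<^sup>2 / (4 * L) \<le> h u - h w - inner (G w) (u - w)"
    by (simp only: 3)
  ultimately show ?thesis using 2 4 by linarith
qed

lemma nonexpansive:
  fixes h :: "'w::euclidean_space \<Rightarrow> real"
  assumes hd: "\<And>w. GDERIV h w :> G w" and hc: "convex_on UNIV h"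
    and hL: "\<And>w u. norm (G w - G u) \<le> L * norm (w - u)" and L: "L > 0"
    and et: "0 \<le> et" "et \<le> 1 / L"
  shows "norm ((w - et *\<^sub>R G w) - (u - et *\<^sub>R G u)) \<le> norm (w - u)"
proof -
  define \<Delta> where "\<Delta> = G w - G u"
  define d where "d = w - u"
  have c: "(norm \<Delta>)\<^sup>2 / (2 * L) \<le> inner \<Delta> d" unfolding \<Delta>_def d_def by (rule cocoercive[OF hd hc hL L])
  have eq: "(w - et *\<^sub>R G w) - (u - et *\<^sub>R G u) = d - et *\<^sub>R \<Delta>"
    by (simp add: d_def \<Delta>_def algebra_simps)
  have "(norm (d - et *\<^sub>R \<Delta>))\<^sup>2 = inner (d - et *\<^sub>R \<Delta>) (d - et *\<^sub>R \<Delta>)"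
    by (simp add: power2_norm_eq_inner)
  also have "\<dots> = inner d d - 2 * et * inner \<Delta> d + et\<^sup>2 * inner \<Delta> \<Delta>"
    by (simp add: inner_diff_left inner_diff_right inner_commute algebra_simps power2_eq_square)
  also have "\<dots> = (norm d)\<^sup>2 - 2 * et * inner \<Delta> d + et\<^sup>2 * (norm \<Delta>)\<^sup>2"
    by (simp add: power2_norm_eq_inner)
  also have "\<dots> \<le> (norm d)\<^sup>2 - 2 * et * ((norm \<Delta>)\<^sup>2 / (2 * L)) + et\<^sup>2 * (norm \<Delta>)\<^sup>2"
  proof -
    have "2 * et * ((norm \<Delta>)\<^sup>2 / (2 * L)) \<le> 2 * et * inner \<Delta> d"
      using c et by (intro mult_left_mono) auto
    then show ?thesis by linarith
  qed
  also have "\<dots> = (norm d)\<^sup>2 - et * (1 / L - et) * (norm \<Delta>)\<^sup>2"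
    using L by (simp add: field_simps power2_eq_square)
  also have "\<dots> \<le> (norm d)\<^sup>2" using et by simp
  finally have "(norm (d - et *\<^sub>R \<Delta>))\<^sup>2 \<le> (norm d)\<^sup>2" .
  then have "norm (d - et *\<^sub>R \<Delta>) \<le> norm d" by (simp add: power_mono_iff)
  then show ?thesis by (simp add: eq d_def)
qed

lemma self_bounding:
  fixes h :: "'w::euclidean_space \<Rightarrow> real"
  assumes hd: "\<And>w. GDERIV h w :> G w" and hc: "convex_on UNIV h"
    and hL: "\<And>w u. norm (G w - G u) \<le> L * norm (w - u)" and L: "L > 0"
    and nn: "\<And>v. 0 \<le> h v"
  shows "(norm (G w))\<^sup>2 \<le> 4 * L * h w"
proof -
  define c where "c = 1 / (2 * L)"
  define u where "u = w - c *\<^sub>R G w"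
  have a: "h u \<le> h w + inner (G w) (u - w) + L * (norm (u - w))\<^sup>2" by (rule descent[OF hd hc hL])
  have "inner (G w) (u - w) = - c * (norm (G w))\<^sup>2" by (simp add: u_def power2_norm_eq_inner)
  moreover have "(norm (u - w))\<^sup>2 = c\<^sup>2 * (norm (G w))\<^sup>2" by (simp add: u_def power_mult_distrib)
  ultimately have "0 \<le> h w - (c - L * c\<^sup>2) * (norm (G w))\<^sup>2" using a nn[of u] by (simp add: algebra_simps)
  moreover have "c - L * c\<^sup>2 = 1 / (4 * L)" using L by (simp add: c_def power2_eq_square field_simps)
  ultimately show ?thesis using L by (simp add: field_simps)
qed



lemma convex_on_sum_fun:
  fixes F :: "'j \<Rightarrow> 'w::real_vector \<Rightarrow> real"
  assumes "finite J" "\<And>j. convex_on UNIV (F j)"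
  shows "convex_on UNIV (\<lambda>v. \<Sum>j\<in>J. F j v)"
  using assms(1)
proof (induction J rule: finite_induct)
  case empty then show ?case by (simp add: convex_on_const)
next
  case (insert x F) then show ?case using assms(2) by (simp add: convex_on_add)
qed

lemma gd_step_split:
  fixes g :: "'w::euclidean_space \<Rightarrow> 'z \<Rightarrow> 'w"
  fixes S :: "nat \<Rightarrow> 'z"
  assumes i: "i < n"
  shows "(\<Sum>j<n. g v (S j)) = g v (S i) + (\<Sum>j\<in>{..<n}-{i}. g v (S j))"
  using i by (subst sum.remove[of _ i]) auto

lemma gd_stab:
  fixes f :: "'w::euclidean_space \<Rightarrow> 'z \<Rightarrow> real"
    and g :: "'w \<Rightarrow> 'z \<Rightarrow> 'w" and eta :: "nat \<Rightarrow> real"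
  assumes n: "n \<ge> 1" and i: "i < n"
    and grad: "\<And>w z. GDERIV (\<lambda>v. f v z) w :> g w z"
    and convex: "\<And>z. convex_on UNIV (\<lambda>w. f w z)"
    and beta: "beta > 0"
    and smooth: "\<And>w u z. norm (g w z - g u z) \<le> beta * norm (w - u)"
    and eta: "\<And>t. 1 \<le> t \<Longrightarrow> t \<le> T + 1 \<Longrightarrow> 0 \<le> eta t \<and> eta t \<le> 1 / (2 * beta)"
    and S': "\<And>j. j < n \<Longrightarrow> j \<noteq> i \<Longrightarrow> S' j = S j"
  shows "k \<le> T \<Longrightarrow> norm (gd_aux n g eta W1 S k - gd_aux n g eta W1 S' k) \<le>
     (\<Sum>t=1..k. eta t / real n * (norm (g (gd_aux n g eta W1 S (t - 1)) (S i))
                 + norm (g (gd_aux n g eta W1 S' (t - 1)) (S' i))))"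
proof (induction k)
  case 0 then show ?case by simp
next
  case (Suc k)
  define J where "J = {..<n} - {i}"
  have finJ: "finite J" by (simp add: J_def)
  define a where "a = gd_aux n g eta W1 S k"
  define b where "b = gd_aux n g eta W1 S' k"
  define et where "et = eta (Suc k)"
  define H where "H = (\<lambda>v. (\<Sum>j\<in>J. f v (S j)) / real n)"
  define GJ where "GJ = (\<lambda>v. (1 / real n) *\<^sub>R (\<Sum>j\<in>J. g v (S j)))"
  have npos: "real n > 0" using n by simp
  have hd: "GDERIV H w :> GJ w" for w
  proof -
    have "(H has_derivative (\<lambda>x. (\<Sum>j\<in>J. inner x (g w (S j))) / real n)) (at w)"
      unfolding H_def using grad npos unfolding gderiv_def
      by (auto intro!: derivative_eq_intros)
    moreover have "(\<lambda>x. (\<Sum>j\<in>J. inner x (g w (S j))) / real n) = (\<lambda>x. inner x (GJ w))"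
      by (auto simp: GJ_def inner_sum_right)
    ultimately show ?thesis by (simp add: gderiv_def)
  qed
  have hc: "convex_on UNIV H"
    unfolding H_def by (intro convex_on_cdiv convex_on_sum_fun finJ convex) simp
  have hL: "norm (GJ w - GJ u) \<le> beta * norm (w - u)" for w u
  proof -
    have "norm (GJ w - GJ u) = norm (\<Sum>j\<in>J. g w (S j) - g u (S j)) / real n"
      by (simp add: GJ_def sum_subtractf[symmetric] scaleR_diff_right[symmetric])
    also have "\<dots> \<le> (\<Sum>j\<in>J. norm (g w (S j) - g u (S j))) / real n"
      by (intro divide_right_mono norm_sum) simp
    also have "\<dots> \<le> (\<Sum>j\<in>J. beta * norm (w - u)) / real n"
      by (intro divide_right_mono sum_mono smooth) simp
    also have "\<dots> = real (card J) / real n * (beta * norm (w - u))" by simp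
    also have "\<dots> \<le> 1 * (beta * norm (w - u))"
    proof (intro mult_right_mono)
      have "card J \<le> n" unfolding J_def by (metis card_Diff1_le card_lessThan finite_lessThan)
      then show "real (card J) / real n \<le> 1" using npos by simp
    qed (use beta in simp)
    finally show ?thesis by simp
  qed
  have et: "0 \<le> et" "et \<le> 1 / beta"
    using eta[of "Suc k"] Suc.prems beta unfolding et_def by (auto simp: field_simps)
  have ne: "norm ((a - et *\<^sub>R GJ a) - (b - et *\<^sub>R GJ b)) \<le> norm (a - b)"
    by (rule nonexpansive[OF hd hc hL beta et])
  have sJ: "(\<Sum>j\<in>J. g b (S' j)) = (\<Sum>j\<in>J. g b (S j))"
    by (intro sum.cong) (auto simp: J_def S')
  have eqa: "gd_aux n g eta W1 S (Suc k) = (a - et *\<^sub>R GJ a) - (et / real n) *\<^sub>R g a (S i)"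
    by (simp add: a_def et_def GJ_def gd_step_split[OF i] J_def[symmetric] scaleR_add_right algebra_simps)
  have eqb: "gd_aux n g eta W1 S' (Suc k) = (b - et *\<^sub>R GJ b) - (et / real n) *\<^sub>R g b (S' i)"
    by (simp add: b_def et_def GJ_def gd_step_split[OF i] J_def[symmetric] sJ[unfolded b_def] scaleR_add_right algebra_simps)
  have "norm (gd_aux n g eta W1 S (Suc k) - gd_aux n g eta W1 S' (Suc k))
      = norm (((a - et *\<^sub>R GJ a) - (b - et *\<^sub>R GJ b)) - (et / real n) *\<^sub>R (g a (S i) - g b (S' i)))"
    unfolding eqa eqb by (simp add: algebra_simps)
  also have "\<dots> \<le> norm ((a - et *\<^sub>R GJ a) - (b - et *\<^sub>R GJ b)) + norm ((et / real n) *\<^sub>R (g a (S i) - g b (S' i)))"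
    by (rule norm_triangle_ineq4)
  also have "\<dots> \<le> norm (a - b) + et / real n * (norm (g a (S i)) + norm (g b (S' i)))"
  proof -
    have "norm ((et / real n) *\<^sub>R (g a (S i) - g b (S' i))) = et / real n * norm (g a (S i) - g b (S' i))"
      using et npos by simp
    also have "\<dots> \<le> et / real n * (norm (g a (S i)) + norm (g b (S' i)))"
      using et npos by (intro mult_left_mono norm_triangle_ineq4) auto
    finally show ?thesis using ne by linarith
  qed
  also have "\<dots> \<le> (\<Sum>t=1..Suc k. eta t / real n * (norm (g (gd_aux n g eta W1 S (t - 1)) (S i))
                 + norm (g (gd_aux n g eta W1 S' (t - 1)) (S' i))))"
    using Suc.IH Suc.prems by (simp add: a_def b_def et_def)
  finally show ?case .
qed



lemma meas_comp2:
  assumes gm: "(\<lambda>(w, z). g w z) \<in> borel_measurable (borel \<Otimes>\<^sub>M D)"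
    and X: "X \<in> borel_measurable M" and Z: "Z \<in> measurable M D"
  shows "(\<lambda>x. g (X x) (Z x)) \<in> borel_measurable M"
  using measurable_compose[OF measurable_Pair[OF X Z] gm] by simp

lemma gd_aux_meas:
  fixes g :: "'w::euclidean_space \<Rightarrow> 'z \<Rightarrow> 'w"
  assumes gm: "(\<lambda>(w, z). g w z) \<in> borel_measurable (borel \<Otimes>\<^sub>M D)"
    and I: "{..<n} \<subseteq> I"
  shows "(\<lambda>T. gd_aux n g eta W1 T k) \<in> borel_measurable (PiM I (\<lambda>_. D))"
proof (induction k)
  case 0 then show ?case by simp
next
  case (Suc k)
  have "(\<lambda>T. g (gd_aux n g eta W1 T k) (T j)) \<in> borel_measurable (PiM I (\<lambda>_. D))" if "j < n" for j
    using that I by (intro meas_comp2[OF gm Suc.IH] measurable_component_singleton) auto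
  then have "(\<lambda>T. \<Sum>j<n. g (gd_aux n g eta W1 T k) (T j)) \<in> borel_measurable (PiM I (\<lambda>_. D))"
    by (intro borel_measurable_sum) auto
  then show ?case using Suc.IH by simp
qed

lemma gd_aux_cong:
  assumes "\<And>j. j < n \<Longrightarrow> S j = S' j"
  shows "gd_aux n g eta W1 S k = gd_aux n g eta W1 S' k"
  by (induction k) (simp_all add: assms)

definition swp :: "nat \<Rightarrow> nat \<Rightarrow> nat \<Rightarrow> nat" where
  "swp a b j = (if j = a then b else if j = b then a else j)"

lemma swp_inj: "inj_on (swp a b) I"
  by (auto simp: swp_def inj_on_def)

lemma PiM_swap:
  assumes D: "prob_space D" and a: "a \<in> I" and b: "b \<in> I"
  shows "distr (PiM I (\<lambda>_. D)) (PiM I (\<lambda>_. D)) (\<lambda>T. \<lambda>j\<in>I. T (swp a b j)) = PiM I (\<lambda>_. D)"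
  using distr_PiM_reindex[of I "\<lambda>_. D" "swp a b" I] D a b swp_inj[of a b I]
  by (auto simp: swp_def)

lemma swap_meas:
  assumes a: "a \<in> I" and b: "b \<in> I"
  shows "(\<lambda>T. \<lambda>j\<in>I. T (swp a b j)) \<in> measurable (PiM I (\<lambda>_. D)) (PiM I (\<lambda>_. D))"
  using a b by (intro measurable_restrict measurable_component_singleton) (auto simp: swp_def)



lemma pps: "prob_space D \<Longrightarrow> product_prob_space (\<lambda>_. D)"
  unfolding product_prob_space_def product_prob_space_axioms_def product_sigma_finite_def
  by (auto simp: prob_space_imp_sigma_finite)

lemma restrict_integral:
  fixes F :: "_ \<Rightarrow> real"
  assumes D: "prob_space D" and JK: "J \<subseteq> K" "finite K"
    and F: "F \<in> borel_measurable (PiM J (\<lambda>_. D))"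
  shows "integral\<^sup>L (PiM J (\<lambda>_. D)) F = integral\<^sup>L (PiM K (\<lambda>_. D)) (\<lambda>x. F (restrict x J))"
    and "integrable (PiM J (\<lambda>_. D)) F = integrable (PiM K (\<lambda>_. D)) (\<lambda>x. F (restrict x J))"
proof -
  interpret product_prob_space "\<lambda>_. D" by (rule pps[OF D])
  have e: "PiM J (\<lambda>_. D) = distr (PiM K (\<lambda>_. D)) (PiM J (\<lambda>_. D)) (\<lambda>f. restrict f J)"
    by (rule distr_restrict[OF JK])
  have m: "(\<lambda>f. restrict f J) \<in> measurable (PiM K (\<lambda>_. D)) (PiM J (\<lambda>_. D))"
    using JK by (intro measurable_restrict_subset) auto
  show "integral\<^sup>L (PiM J (\<lambda>_. D)) F = integral\<^sup>L (PiM K (\<lambda>_. D)) (\<lambda>x. F (restrict x J))"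
    by (subst e) (rule integral_distr[OF m F])
  show "integrable (PiM J (\<lambda>_. D)) F = integrable (PiM K (\<lambda>_. D)) (\<lambda>x. F (restrict x J))"
    by (subst e) (rule integrable_distr_eq[OF m F])
qed

lemma swap_integral:
  fixes F :: "_ \<Rightarrow> real"
  assumes D: "prob_space D" and a: "a \<in> I" and b: "b \<in> I"
    and F: "F \<in> borel_measurable (PiM I (\<lambda>_. D))"
  shows "integral\<^sup>L (PiM I (\<lambda>_. D)) (\<lambda>x. F (\<lambda>j\<in>I. x (swp a b j))) = integral\<^sup>L (PiM I (\<lambda>_. D)) F"
    and "integrable (PiM I (\<lambda>_. D)) (\<lambda>x. F (\<lambda>j\<in>I. x (swp a b j))) = integrable (PiM I (\<lambda>_. D)) F"
proof -
  note e = PiM_swap[OF D a b]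
  note m = swap_meas[OF a b, of D]
  show "integral\<^sup>L (PiM I (\<lambda>_. D)) (\<lambda>x. F (\<lambda>j\<in>I. x (swp a b j))) = integral\<^sup>L (PiM I (\<lambda>_. D)) F"
    using integral_distr[OF m F] e by simp
  show "integrable (PiM I (\<lambda>_. D)) (\<lambda>x. F (\<lambda>j\<in>I. x (swp a b j))) = integrable (PiM I (\<lambda>_. D)) F"
    using integrable_distr_eq[OF m F] e by simp
qed

lemma gd_aux_perm:
  assumes "bij_betw \<pi> {..<n} {..<n}"
  shows "gd_aux n g eta W1 (\<lambda>j. S (\<pi> j)) k = gd_aux n g eta W1 S k"
proof (induction k)
  case 0 then show ?case by simp
next
  case (Suc k)
  have "(\<Sum>j<n. g (gd_aux n g eta W1 S k) (S (\<pi> j))) = (\<Sum>j<n. g (gd_aux n g eta W1 S k) (S j))"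
    using sum.reindex_bij_betw[OF assms, of "\<lambda>j. g (gd_aux n g eta W1 S k) (S j)"] by simp
  then show ?case using Suc.IH by simp
qed

lemma swp_bij: "a \<in> I \<Longrightarrow> b \<in> I \<Longrightarrow> bij_betw (swp a b) I I"
  unfolding bij_betw_def using swp_inj[of a b I] by (auto simp: swp_def image_iff)



lemma real_cs_param:
  fixes x A B :: real
  assumes A: "0 \<le> A" and B: "0 \<le> B" and h: "\<And>c. c > 0 \<Longrightarrow> 2 * x \<le> c * A + B / c"
  shows "x \<le> sqrt A * sqrt B"
proof (cases "A > 0 \<and> B > 0")
  case True
  define c where "c = sqrt B / sqrt A"
  have c: "c > 0" using True by (simp add: c_def)
  have "c * A = sqrt A * sqrt B" using True
    by (simp add: c_def field_simps)
  moreover have "B / c = sqrt A * sqrt B" using True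
    by (simp add: c_def field_simps)
  ultimately show ?thesis using h[OF c] by simp
next
  case False
  show ?thesis
  proof (rule ccontr)
    assume "\<not> ?thesis"
    then have x: "x > 0" using A B by (smt (verit) real_sqrt_ge_zero mult_nonneg_nonneg)
    show False
    proof (cases "A = 0")
      case True
      define c where "c = B / x + 1"
      have c: "c > 0" using x B unfolding c_def by (smt (verit) divide_nonneg_pos)
      have "B / c < x"
      proof -
        have "B < x * c" using x B by (simp add: c_def field_simps)
        then show ?thesis using c by (simp add: field_simps)
      qed
      then show False using h[OF c] True x by simp
    next
      case False
      then have "B = 0" "A > 0" using \<open>\<not> (A > 0 \<and> B > 0)\<close> A B by auto
      define c where "c = x / A"
      have c: "c > 0" using x \<open>A > 0\<close> by (simp add: c_def)
      have "c * A = x" using \<open>A > 0\<close> by (simp add: c_def)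
      then show False using h[OF c] \<open>B = 0\<close> x by simp
    qed
  qed
qed

lemma integral_cs:
  fixes a d :: "_ \<Rightarrow> real"
  assumes ia: "integrable M (\<lambda>x. (a x)\<^sup>2)" and id: "integrable M (\<lambda>x. (d x)\<^sup>2)"
    and iad: "integrable M (\<lambda>x. a x * d x)"
  shows "(\<integral>x. a x * d x \<partial>M) \<le> sqrt (\<integral>x. (a x)\<^sup>2 \<partial>M) * sqrt (\<integral>x. (d x)\<^sup>2 \<partial>M)"
proof (rule real_cs_param)
  show "0 \<le> (\<integral>x. (a x)\<^sup>2 \<partial>M)" "0 \<le> (\<integral>x. (d x)\<^sup>2 \<partial>M)" by (auto intro: integral_nonneg_AE)
  fix c :: real assume c: "c > 0"
  have pt: "2 * (a x * d x) \<le> c * (a x)\<^sup>2 + (d x)\<^sup>2 / c" for x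
  proof -
    have "0 \<le> (c * a x - d x)\<^sup>2" by simp
    then have "2 * c * (a x * d x) \<le> c * (c * (a x)\<^sup>2) + (d x)\<^sup>2"
      by (simp add: power2_eq_square algebra_simps)
    then show ?thesis using c by (simp add: field_simps power2_eq_square)
  qed
  have "2 * (\<integral>x. a x * d x \<partial>M) = (\<integral>x. 2 * (a x * d x) \<partial>M)" by simp
  also have "\<dots> \<le> (\<integral>x. c * (a x)\<^sup>2 + (d x)\<^sup>2 / c \<partial>M)"
    using ia id iad pt by (intro integral_mono) auto
  also have "\<dots> = c * (\<integral>x. (a x)\<^sup>2 \<partial>M) + (\<integral>x. (d x)\<^sup>2 \<partial>M) / c"
    using ia id by simp
  finally show "2 * (\<integral>x. a x * d x \<partial>M) \<le> c * (\<integral>x. (a x)\<^sup>2 \<partial>M) + (\<integral>x. (d x)\<^sup>2 \<partial>M) / c" .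
qed

lemma weighted_cs:
  fixes e c :: "'a \<Rightarrow> real"
  assumes "\<And>t. t \<in> I \<Longrightarrow> 0 \<le> e t"
  shows "(\<Sum>t\<in>I. e t * c t)\<^sup>2 \<le> (\<Sum>t\<in>I. e t) * (\<Sum>t\<in>I. e t * (c t)\<^sup>2)"
proof -
  have "(\<Sum>t\<in>I. sqrt (e t) * (sqrt (e t) * c t))\<^sup>2 \<le> (\<Sum>t\<in>I. (sqrt (e t))\<^sup>2) * (\<Sum>t\<in>I. (sqrt (e t) * c t)\<^sup>2)"
    by (rule Cauchy_Schwarz_ineq_sum)
  moreover have "(\<Sum>t\<in>I. sqrt (e t) * (sqrt (e t) * c t)) = (\<Sum>t\<in>I. e t * c t)"
    using assms by (intro sum.cong) (auto simp flip: mult.assoc)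
  moreover have "(\<Sum>t\<in>I. (sqrt (e t))\<^sup>2) = (\<Sum>t\<in>I. e t)"
    using assms by (intro sum.cong) auto
  moreover have "(\<Sum>t\<in>I. (sqrt (e t) * c t)\<^sup>2) = (\<Sum>t\<in>I. e t * (c t)\<^sup>2)"
    using assms by (intro sum.cong) (auto simp: power_mult_distrib)
  ultimately show ?thesis by simp
qed



lemma bm_norm: "(h :: _ \<Rightarrow> 'b::euclidean_space) \<in> borel_measurable M \<Longrightarrow> (\<lambda>x. norm (h x)) \<in> borel_measurable M"
  by measurable

theorem theorem11:
  fixes D :: "'z measure" and f :: "'w::euclidean_space \<Rightarrow> 'z \<Rightarrow> real"
    and g :: "'w \<Rightarrow> 'z \<Rightarrow> 'w" and eta :: "nat \<Rightarrow> real" and W1 :: 'w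
    and beta :: real and n T i :: nat
  assumes D: "prob_space D"
    and n: "n \<ge> 1" and i: "i < n"
    and nonneg: "\<And>w z. f w z \<ge> 0"
    and grad: "\<And>w z. GDERIV (\<lambda>v. f v z) w :> g w z"
    and convex: "\<And>z. convex_on UNIV (\<lambda>w. f w z)"
    and beta: "beta > 0"
    and smooth: "\<And>w u z. norm (g w z - g u z) \<le> beta * norm (w - u)"
    and eta: "\<And>t. 1 \<le> t \<Longrightarrow> t \<le> T + 1 \<Longrightarrow> 0 \<le> eta t \<and> eta t \<le> 1 / (2 * beta)"
    and f_meas: "(\<lambda>(w, z). f w z) \<in> borel_measurable (borel \<Otimes>\<^sub>M D)"
    and g_meas: "(\<lambda>(w, z). g w z) \<in> borel_measurable (borel \<Otimes>\<^sub>M D)"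
    and f_int: "\<And>w. integrable D (f w)"
    and minimizer_ex: "\<And>S. S \<in> space (sample_measure n D) \<Longrightarrow> \<exists>w. \<forall>u. emp_risk n f S w \<le> emp_risk n f S u"
    and int_pop: "integrable (sample_measure n D) (\<lambda>S. pop_risk D f (gd_out n g eta W1 T S))"
    and int_emp: "integrable (sample_measure n D) (\<lambda>S. emp_risk n f S (gd_out n g eta W1 T S))"
    and int_min: "integrable (sample_measure n D) (\<lambda>S. emp_risk n f S (emp_minimizer n f S))"
    and int_grad: "\<And>t. 1 \<le> t \<Longrightarrow> t \<le> T \<Longrightarrow>
        integrable (sample_measure n D) (\<lambda>S. (norm (g (gd_iter n g eta W1 S t) (S i)))\<^sup>2)"
  shows "\<bar>eps_gen n D f g eta W1 T\<bar>
    \<le> 4 * sqrt (2 * beta * (eps_opt n D f g eta W1 T + eps_c n D f) * eps_path n D g eta W1 T i) / real n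
         * sqrt (\<Sum>t=1..T. eta t)
       + 8 * beta * eps_path n D g eta W1 T i / (real n)\<^sup>2 * (\<Sum>t=1..T. eta t)"
proof -
  interpret Dp: prob_space D by (rule D)
  define M where "M = sample_measure n D"
  define I where "I = insert n {..<n}"
  define P where "P = PiM I (\<lambda>_. D)"
  define out :: "(nat \<Rightarrow> 'z) \<Rightarrow> 'w" where "out x = gd_aux n g eta W1 x T" for x
  define sw :: "(nat \<Rightarrow> 'z) \<Rightarrow> nat \<Rightarrow> 'z" where "sw x = (\<lambda>j\<in>I. x (swp i n j))" for x
  have M_eq: "M = PiM {..<n} (\<lambda>_. D)" by (simp add: M_def sample_measure_def)
  have gd_out_eq: "gd_out n g eta W1 T S = out S" for S by (simp add: gd_out_def gd_iter_def out_def)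
  have iI: "i \<in> I" "n \<in> I" "{..<n} \<subseteq> I" "finite I" using i by (auto simp: I_def)
  have npos: "real n > 0" using n by simp
  have mM_gd: "(\<lambda>x. gd_aux n g eta W1 x k) \<in> borel_measurable M" for k
    unfolding M_eq by (rule gd_aux_meas[OF g_meas]) simp
  have mP_gd: "(\<lambda>x. gd_aux n g eta W1 x k) \<in> borel_measurable P" for k
    unfolding P_def by (rule gd_aux_meas[OF g_meas iI(3)])
  have cM: "j < n \<Longrightarrow> (\<lambda>x. x j) \<in> measurable M D" for j
    unfolding M_eq by (rule measurable_component_singleton) simp
  have cP: "j \<in> I \<Longrightarrow> (\<lambda>x. x j) \<in> measurable P D" for j
    unfolding P_def by (rule measurable_component_singleton)
  have msw: "sw \<in> measurable P P"
    unfolding P_def sw_def[abs_def] by (rule swap_meas[OF iI(1,2)])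
  note mf = meas_comp2[OF f_meas] and mg = meas_comp2[OF g_meas]
  (* step 1: empirical risk symmetry *)
  have fj_meas: "j < n \<Longrightarrow> (\<lambda>S. f (out S) (S j)) \<in> borel_measurable M" for j
    unfolding out_def by (intro mf mM_gd cM)
  have fj_int: "integrable M (\<lambda>S. f (out S) (S j))" if j: "j < n" for j
  proof (rule Bochner_Integration.integrable_bound)
    show "integrable M (\<lambda>S. real n * emp_risk n f S (out S))"
      using int_emp unfolding M_def gd_out_eq by simp
    show "(\<lambda>S. f (out S) (S j)) \<in> borel_measurable M" by (rule fj_meas[OF j])
    show "AE S in M. norm (f (out S) (S j)) \<le> norm (real n * emp_risk n f S (out S))"
    proof (intro AE_I2)
      fix S
      have "f (out S) (S j) \<le> (\<Sum>k<n. f (out S) (S k))"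
        using j by (intro member_le_sum nonneg) auto
      also have "\<dots> = real n * emp_risk n f S (out S)" using npos by (simp add: emp_risk_def)
      finally show "norm (f (out S) (S j)) \<le> norm (real n * emp_risk n f S (out S))"
        using nonneg[of "out S" "S j"] by simp
    qed
  qed
  have fj_eq: "(\<integral>S. f (out S) (S j) \<partial>M) = (\<integral>S. f (out S) (S i) \<partial>M)" if j: "j < n" for j
  proof -
    have "(\<integral>S. f (out S) (S i) \<partial>M) = (\<integral>x. (\<lambda>S. f (out S) (S i)) (\<lambda>l\<in>{..<n}. x (swp i j l)) \<partial>M)"
      unfolding M_eq using swap_integral(1)[OF D _ _ fj_meas[OF i, unfolded M_eq], of i j] i j by simp
    also have "\<dots> = (\<integral>S. f (out S) (S j) \<partial>M)"
    proof (intro Bochner_Integration.integral_cong refl)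
      fix x :: "nat \<Rightarrow> 'z"
      have "out (\<lambda>l\<in>{..<n}. x (swp i j l)) = out (\<lambda>l. x (swp i j l))"
        unfolding out_def by (rule gd_aux_cong) simp
      also have "\<dots> = out x" unfolding out_def
        by (rule gd_aux_perm[OF swp_bij]) (use i j in auto)
      finally show "(\<lambda>S. f (out S) (S i)) (\<lambda>l\<in>{..<n}. x (swp i j l)) = f (out x) (x j)"
        using i by (simp add: swp_def)
    qed
    finally show ?thesis by simp
  qed
  have emp_eq: "(\<integral>S. emp_risk n f S (out S) \<partial>M) = (\<integral>S. f (out S) (S i) \<partial>M)"
  proof -
    have "(\<integral>S. emp_risk n f S (out S) \<partial>M) = (\<integral>S. (\<Sum>j<n. f (out S) (S j)) \<partial>M) / real n"
      by (simp add: emp_risk_def)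
    also have "(\<integral>S. (\<Sum>j<n. f (out S) (S j)) \<partial>M) = (\<Sum>j<n. (\<integral>S. f (out S) (S j) \<partial>M))"
      using fj_int by (intro Bochner_Integration.integral_sum) auto
    also have "\<dots> = (\<Sum>j<n. (\<integral>S. f (out S) (S i) \<partial>M))"
      using fj_eq by (intro sum.cong) auto
    finally show ?thesis using npos by simp
  qed
  have X_eq: "eps_opt n D f g eta W1 T + eps_c n D f = (\<integral>S. f (out S) (S i) \<partial>M)"
  proof -
    have "eps_opt n D f g eta W1 T = (\<integral>S. emp_risk n f S (out S) \<partial>M) - eps_c n D f"
      unfolding eps_opt_def eps_c_def M_def gd_out_eq
      using int_emp int_min unfolding gd_out_eq by (rule Bochner_Integration.integral_diff)
    then show ?thesis using emp_eq by simp
  qed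
  have out_upd: "out (S(n := y)) = out S" for S y
    unfolding out_def by (rule gd_aux_cong) simp
  have mPn: "(\<lambda>x. f (out x) (x n)) \<in> borel_measurable P"
    unfolding out_def by (intro mf mP_gd cP iI)
  have pop_nn: "(\<integral>\<^sup>+x. ennreal (f (out x) (x n)) \<partial>P) = ennreal (\<integral>S. pop_risk D f (out S) \<partial>M)"
  proof -
    interpret pp: product_prob_space "\<lambda>_. D" by (rule pps[OF D])
    have "(\<integral>\<^sup>+x. ennreal (f (out x) (x n)) \<partial>P)
        = (\<integral>\<^sup>+S. (\<integral>\<^sup>+y. ennreal (f (out (S(n := y))) ((S(n := y)) n)) \<partial>D) \<partial>M)"
      unfolding P_def I_def M_eq
      by (rule pp.product_nn_integral_insert) (use mPn in \<open>auto simp: P_def I_def\<close>)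
    also have "\<dots> = (\<integral>\<^sup>+S. ennreal (pop_risk D f (out S)) \<partial>M)"
    proof (intro nn_integral_cong)
      fix S
      show "(\<integral>\<^sup>+y. ennreal (f (out (S(n := y))) ((S(n := y)) n)) \<partial>D) = ennreal (pop_risk D f (out S))"
        unfolding out_upd pop_risk_def using f_int nonneg
        by (simp add: nn_integral_eq_integral)
    qed
    also have "\<dots> = ennreal (\<integral>S. pop_risk D f (out S) \<partial>M)"
      using int_pop unfolding M_def gd_out_eq
      by (intro nn_integral_eq_integral) (auto simp: pop_risk_def intro!: integral_nonneg_AE AE_I2 nonneg)
    finally show ?thesis .
  qed
  have int_Pn: "integrable P (\<lambda>x. f (out x) (x n))"
    by (rule integrableI_nn_integral_finite[OF mPn _ pop_nn]) (auto intro: nonneg)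
  have E_Pn: "(\<integral>x. f (out x) (x n) \<partial>P) = (\<integral>S. pop_risk D f (out S) \<partial>M)"
  proof -
    have "0 \<le> (\<integral>S. pop_risk D f (out S) \<partial>M)"
      by (auto simp: pop_risk_def intro!: integral_nonneg_AE AE_I2 nonneg)
    then show ?thesis
      using integral_eq_nn_integral[OF mPn] pop_nn nonneg by simp
  qed
  have sw_n: "sw x n = x i" for x using iI by (simp add: sw_def swp_def)
  have sw_i: "sw x i = x n" for x using iI by (simp add: sw_def swp_def)
  have sw_j: "j < n \<Longrightarrow> j \<noteq> i \<Longrightarrow> sw x j = x j" for x j using iI by (auto simp: sw_def swp_def)
  have int_Pu: "integrable P (\<lambda>x. f (out (sw x)) (x i))"
    and E_Pu: "(\<integral>x. f (out (sw x)) (x i) \<partial>P) = (\<integral>S. pop_risk D f (out S) \<partial>M)"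
  proof -
    note sI = swap_integral[OF D iI(1,2) mPn[unfolded P_def]]
    have e: "(\<lambda>x. (\<lambda>x. f (out x) (x n)) (\<lambda>j\<in>I. x (swp i n j))) = (\<lambda>x. f (out (sw x)) (x i))"
      using sw_n by (simp add: sw_def[symmetric])
    show "integrable P (\<lambda>x. f (out (sw x)) (x i))" using sI(2) int_Pn unfolding e P_def by simp
    show "(\<integral>x. f (out (sw x)) (x i) \<partial>P) = (\<integral>S. pop_risk D f (out S) \<partial>M)"
      using sI(1) E_Pn unfolding e P_def by simp
  qed
  have restr_out: "out (restrict x {..<n}) = out x" for x
    unfolding out_def by (rule gd_aux_cong) simp
  have int_Pw: "integrable P (\<lambda>x. f (out x) (x i))"
    and E_Pw: "(\<integral>x. f (out x) (x i) \<partial>P) = (\<integral>S. f (out S) (S i) \<partial>M)"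
  proof -
    note rI = restrict_integral[OF D iI(3,4) fj_meas[OF i, unfolded M_eq]]
    have e: "(\<lambda>x. (\<lambda>S. f (out S) (S i)) (restrict x {..<n})) = (\<lambda>x. f (out x) (x i))"
      using i by (simp add: restr_out)
    show "integrable P (\<lambda>x. f (out x) (x i))" using rI(2) fj_int[OF i] unfolding e P_def M_eq by simp
    show "(\<integral>x. f (out x) (x i) \<partial>P) = (\<integral>S. f (out S) (S i) \<partial>M)"
      using rI(1) unfolding e P_def M_eq by simp
  qed
  define p where "p t = (\<integral>S. (norm (g (gd_iter n g eta W1 S t) (S i)))\<^sup>2 \<partial>M)" for t
  define aT where "aT t x = norm (g (gd_aux n g eta W1 x (t - 1)) (x i))" for t x
  define bt where "bt t x = norm (g (gd_aux n g eta W1 (sw x) (t - 1)) (sw x i))" for t x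
  have Hmeas: "(\<lambda>S. (norm (g (gd_iter n g eta W1 S t) (S i)))\<^sup>2) \<in> borel_measurable (PiM {..<n} (\<lambda>_. D))" for t
    unfolding gd_iter_def
    by (intro borel_measurable_power bm_norm mg gd_aux_meas[OF g_meas] measurable_component_singleton) (use i in auto)
  have path: "integrable P (\<lambda>x. (aT t x)\<^sup>2) \<and> integrable P (\<lambda>x. (bt t x)\<^sup>2) \<and>
      (\<integral>x. (aT t x)\<^sup>2 \<partial>P) = p t \<and> (\<integral>x. (bt t x)\<^sup>2 \<partial>P) = p t" if t: "1 \<le> t" "t \<le> T" for t
  proof -
    note rI = restrict_integral[OF D iI(3,4) Hmeas[of t]]
    have e: "(\<lambda>x. (\<lambda>S. (norm (g (gd_iter n g eta W1 S t) (S i)))\<^sup>2) (restrict x {..<n})) = (\<lambda>x. (aT t x)\<^sup>2)"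
    proof
      fix x :: "nat \<Rightarrow> 'z"
      have "gd_aux n g eta W1 (restrict x {..<n}) (t - 1) = gd_aux n g eta W1 x (t - 1)"
        by (rule gd_aux_cong) simp
      then show "(\<lambda>S. (norm (g (gd_iter n g eta W1 S t) (S i)))\<^sup>2) (restrict x {..<n}) = (aT t x)\<^sup>2"
        using i by (simp add: aT_def gd_iter_def)
    qed
    have ia: "integrable P (\<lambda>x. (aT t x)\<^sup>2)" using rI(2) int_grad[OF t] unfolding e P_def M_eq M_def[symmetric] by simp
    have Ea: "(\<integral>x. (aT t x)\<^sup>2 \<partial>P) = p t" using rI(1) unfolding e P_def M_eq p_def by simp
    have am: "(\<lambda>x. (aT t x)\<^sup>2) \<in> borel_measurable P"
      unfolding aT_def by (intro borel_measurable_power bm_norm mg mP_gd cP iI)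
    note sI = swap_integral[OF D iI(1,2) am[unfolded P_def]]
    have e2: "(\<lambda>x. (\<lambda>x. (aT t x)\<^sup>2) (\<lambda>j\<in>I. x (swp i n j))) = (\<lambda>x. (bt t x)\<^sup>2)"
      by (simp add: aT_def bt_def sw_def)
    show ?thesis using sI ia Ea unfolding e2 P_def by simp
  qed
  define dl where "dl x = norm (out (sw x) - out x)" for x
  define ax where "ax x = norm (g (out x) (x i))" for x
  define Sig where "Sig = (\<Sum>t=1..T. eta t)"
  define R where "R x = 2 * Sig / (real n)\<^sup>2 * (\<Sum>t=1..T. eta t * ((aT t x)\<^sup>2 + (bt t x)\<^sup>2))" for x
  have etat: "t \<in> {1..T} \<Longrightarrow> 0 \<le> eta t" for t using eta[of t] by auto
  have Sig0: "0 \<le> Sig" unfolding Sig_def using etat by (intro sum_nonneg) auto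
  have B1: "f (out (sw x)) (x i) - f (out x) (x i) \<le> ax x * dl x + beta * (dl x)\<^sup>2" for x
  proof -
    have "f (out (sw x)) (x i) \<le> f (out x) (x i) + inner (g (out x) (x i)) (out (sw x) - out x) + beta * (norm (out (sw x) - out x))\<^sup>2"
      by (rule descent[where G = "\<lambda>w. g w (x i)", OF grad convex smooth])
    moreover have "inner (g (out x) (x i)) (out (sw x) - out x) \<le> ax x * dl x"
      unfolding ax_def dl_def by (rule norm_cauchy_schwarz)
    ultimately show ?thesis unfolding dl_def by linarith
  qed
  have B2: "f (out x) (x i) - f (out (sw x)) (x i) \<le> ax x * dl x" for x
  proof -
    have "f (out x) (x i) + inner (g (out x) (x i)) (out (sw x) - out x) \<le> f (out (sw x)) (x i)"
      by (rule first_order[OF grad convex])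
    moreover have "- inner (g (out x) (x i)) (out (sw x) - out x) \<le> ax x * dl x"
    proof -
      have "- inner (g (out x) (x i)) (out (sw x) - out x) \<le> \<bar>inner (g (out x) (x i)) (out (sw x) - out x)\<bar>" by simp
      also have "\<dots> \<le> ax x * dl x" unfolding ax_def dl_def by (rule Cauchy_Schwarz_ineq2)
      finally show ?thesis .
    qed
    ultimately show ?thesis by linarith
  qed
  have B3: "(ax x)\<^sup>2 \<le> 4 * beta * f (out x) (x i)" for x
    unfolding ax_def by (rule self_bounding[where G = "\<lambda>w. g w (x i)", OF grad convex smooth beta nonneg])
  have B4: "(dl x)\<^sup>2 \<le> R x" for x
  proof -
    have st: "norm (gd_aux n g eta W1 x T - gd_aux n g eta W1 (sw x) T) \<le>
      (\<Sum>t=1..T. eta t / real n * (aT t x + bt t x))"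
      unfolding aT_def bt_def
      by (rule gd_stab[where S'="sw x" and S=x, OF n i grad convex beta smooth eta]) (auto simp: sw_j)
    then have st': "dl x \<le> (\<Sum>t=1..T. eta t * (aT t x + bt t x)) / real n"
      unfolding dl_def out_def by (simp add: norm_minus_commute sum_divide_distrib)
    have "(dl x)\<^sup>2 \<le> ((\<Sum>t=1..T. eta t * (aT t x + bt t x)) / real n)\<^sup>2"
      using st' by (intro power_mono) (auto simp: dl_def)
    also have "\<dots> = (\<Sum>t=1..T. eta t * (aT t x + bt t x))\<^sup>2 / (real n)\<^sup>2" by (simp add: power_divide)
    also have "\<dots> \<le> (Sig * (\<Sum>t=1..T. eta t * (aT t x + bt t x)\<^sup>2)) / (real n)\<^sup>2"
      unfolding Sig_def by (intro divide_right_mono weighted_cs etat) auto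
    also have "\<dots> \<le> (Sig * (\<Sum>t=1..T. eta t * (2 * ((aT t x)\<^sup>2 + (bt t x)\<^sup>2)))) / (real n)\<^sup>2"
    proof -
      have "eta t * (aT t x + bt t x)\<^sup>2 \<le> eta t * (2 * ((aT t x)\<^sup>2 + (bt t x)\<^sup>2))" if "t \<in> {1..T}" for t
      proof -
        have "(aT t x + bt t x)\<^sup>2 \<le> 2 * ((aT t x)\<^sup>2 + (bt t x)\<^sup>2)"
          by (smt (verit) sum_squares_bound power2_sum)
        then show ?thesis using etat[OF that] by (rule mult_left_mono)
      qed
      then have "(\<Sum>t=1..T. eta t * (aT t x + bt t x)\<^sup>2) \<le> (\<Sum>t=1..T. eta t * (2 * ((aT t x)\<^sup>2 + (bt t x)\<^sup>2)))"
        by (rule sum_mono)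
      then show ?thesis using Sig0 by (intro divide_right_mono mult_left_mono) auto
    qed
    also have "\<dots> = R x"
      unfolding R_def by (simp add: sum_distrib_left sum_divide_distrib algebra_simps add_divide_distrib)
    finally show ?thesis .
  qed
  have mw: "out \<in> borel_measurable P" unfolding out_def[abs_def] by (rule mP_gd)
  have mu: "(\<lambda>x. out (sw x)) \<in> borel_measurable P" by (rule measurable_compose[OF msw mw])
  have m_dl: "dl \<in> borel_measurable P"
    unfolding dl_def[abs_def] by (intro bm_norm borel_measurable_diff mu mw)
  have m_ax: "ax \<in> borel_measurable P"
    unfolding ax_def[abs_def] by (intro bm_norm mg mw cP iI)
  have int_R: "integrable P R"
    unfolding R_def[abs_def] using path
    by (intro integrable_mult_right Bochner_Integration.integrable_sum Bochner_Integration.integrable_add) auto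
  have R_ge: "(dl x)\<^sup>2 \<le> R x" "0 \<le> R x" for x using B4[of x] by (auto intro: order_trans[OF zero_le_power2])
  have int_dl2: "integrable P (\<lambda>x. (dl x)\<^sup>2)"
    by (rule Bochner_Integration.integrable_bound[OF int_R]) (use m_dl R_ge in auto)
  have int_ax2: "integrable P (\<lambda>x. (ax x)\<^sup>2)"
  proof (rule Bochner_Integration.integrable_bound)
    show "integrable P (\<lambda>x. 4 * beta * f (out x) (x i))" using int_Pw by simp
    show "(\<lambda>x. (ax x)\<^sup>2) \<in> borel_measurable P" using m_ax by simp
    show "AE x in P. norm ((ax x)\<^sup>2) \<le> norm (4 * beta * f (out x) (x i))"
      using B3 beta nonneg by (intro AE_I2) (simp add: abs_of_nonneg)
  qed
  have int_axdl: "integrable P (\<lambda>x. ax x * dl x)"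
  proof (rule Bochner_Integration.integrable_bound)
    show "integrable P (\<lambda>x. (ax x)\<^sup>2 + (dl x)\<^sup>2)" using int_ax2 int_dl2 by simp
    show "(\<lambda>x. ax x * dl x) \<in> borel_measurable P" using m_ax m_dl by simp
    show "AE x in P. norm (ax x * dl x) \<le> norm ((ax x)\<^sup>2 + (dl x)\<^sup>2)"
    proof (intro AE_I2)
      fix x
      have "0 \<le> ax x" "0 \<le> dl x" by (auto simp: ax_def dl_def)
      moreover have "ax x * dl x \<le> (ax x)\<^sup>2 + (dl x)\<^sup>2"
        using sum_squares_bound[of "ax x" "dl x"] mult_nonneg_nonneg[OF calculation] by linarith
      ultimately show "norm (ax x * dl x) \<le> norm ((ax x)\<^sup>2 + (dl x)\<^sup>2)" by simp
    qed
  qed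
  define X where "X = (\<integral>x. f (out x) (x i) \<partial>P)"
  define Pi where "Pi = eps_path n D g eta W1 T i"
  have X_eq': "eps_opt n D f g eta W1 T + eps_c n D f = X" using X_eq E_Pw by (simp add: X_def)
  have Pi_eq: "Pi = (\<Sum>t=1..T. eta t * p t)" by (simp add: Pi_def eps_path_def p_def M_def)
  have X0: "0 \<le> X" unfolding X_def by (auto intro!: integral_nonneg_AE AE_I2 nonneg)
  have p0: "0 \<le> p t" for t unfolding p_def by (auto intro!: integral_nonneg_AE)
  have Pi0: "0 \<le> Pi" unfolding Pi_eq using etat p0 by (intro sum_nonneg mult_nonneg_nonneg) auto
  have EG: "eps_gen n D f g eta W1 T = (\<integral>x. f (out (sw x)) (x i) - f (out x) (x i) \<partial>P)"
  proof -
    have "eps_gen n D f g eta W1 T = (\<integral>S. pop_risk D f (out S) \<partial>M) - (\<integral>S. emp_risk n f S (out S) \<partial>M)"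
      unfolding eps_gen_def M_def gd_out_eq
      using int_pop int_emp unfolding gd_out_eq by (rule Bochner_Integration.integral_diff)
    also have "\<dots> = (\<integral>x. f (out (sw x)) (x i) \<partial>P) - (\<integral>x. f (out x) (x i) \<partial>P)"
      using E_Pu E_Pw emp_eq by simp
    also have "\<dots> = (\<integral>x. f (out (sw x)) (x i) - f (out x) (x i) \<partial>P)"
      using int_Pu int_Pw by simp
    finally show ?thesis .
  qed
  have up: "eps_gen n D f g eta W1 T \<le> (\<integral>x. ax x * dl x \<partial>P) + beta * (\<integral>x. (dl x)\<^sup>2 \<partial>P)"
  proof -
    have "eps_gen n D f g eta W1 T \<le> (\<integral>x. ax x * dl x + beta * (dl x)\<^sup>2 \<partial>P)"
      unfolding EG using int_Pu int_Pw int_axdl int_dl2 B1 by (intro integral_mono) auto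
    also have "\<dots> = (\<integral>x. ax x * dl x \<partial>P) + beta * (\<integral>x. (dl x)\<^sup>2 \<partial>P)"
      using int_axdl int_dl2 by simp
    finally show ?thesis .
  qed
  have Ed0: "0 \<le> (\<integral>x. (dl x)\<^sup>2 \<partial>P)" by (auto intro!: integral_nonneg_AE)
  have lo: "- eps_gen n D f g eta W1 T \<le> (\<integral>x. ax x * dl x \<partial>P) + beta * (\<integral>x. (dl x)\<^sup>2 \<partial>P)"
  proof -
    have "- eps_gen n D f g eta W1 T = (\<integral>x. f (out x) (x i) - f (out (sw x)) (x i) \<partial>P)"
      unfolding EG by (simp flip: Bochner_Integration.integral_minus)
    also have "\<dots> \<le> (\<integral>x. ax x * dl x \<partial>P)"
      using int_Pu int_Pw int_axdl B2 by (intro integral_mono) auto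
    moreover have "0 \<le> beta * (\<integral>x. (dl x)\<^sup>2 \<partial>P)" using Ed0 beta by simp
    ultimately show ?thesis by linarith
  qed
  have cs: "(\<integral>x. ax x * dl x \<partial>P) \<le> sqrt (\<integral>x. (ax x)\<^sup>2 \<partial>P) * sqrt (\<integral>x. (dl x)\<^sup>2 \<partial>P)"
    by (rule integral_cs[OF int_ax2 int_dl2 int_axdl])
  have Ea2: "(\<integral>x. (ax x)\<^sup>2 \<partial>P) \<le> 4 * beta * X"
  proof -
    have "(\<integral>x. (ax x)\<^sup>2 \<partial>P) \<le> (\<integral>x. 4 * beta * f (out x) (x i) \<partial>P)"
      using int_ax2 int_Pw B3 by (intro integral_mono) auto
    then show ?thesis by (simp add: X_def)
  qed
  have Ed2: "(\<integral>x. (dl x)\<^sup>2 \<partial>P) \<le> 4 * Sig * Pi / (real n)\<^sup>2"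
  proof -
    have "(\<integral>x. (dl x)\<^sup>2 \<partial>P) \<le> (\<integral>x. R x \<partial>P)"
      using int_dl2 int_R R_ge by (intro integral_mono) auto
    also have "(\<integral>x. R x \<partial>P) = 2 * Sig / (real n)\<^sup>2 * (\<Sum>t=1..T. (\<integral>x. eta t * ((aT t x)\<^sup>2 + (bt t x)\<^sup>2) \<partial>P))"
      unfolding R_def using path
      by (subst integral_mult_right_zero, subst Bochner_Integration.integral_sum) auto
    also have "(\<Sum>t=1..T. (\<integral>x. eta t * ((aT t x)\<^sup>2 + (bt t x)\<^sup>2) \<partial>P)) = (\<Sum>t=1..T. eta t * (2 * p t))"
      using path by (intro sum.cong refl) auto
    also have "2 * Sig / (real n)\<^sup>2 * (\<Sum>t=1..T. eta t * (2 * p t)) = 4 * Sig * Pi / (real n)\<^sup>2"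
      unfolding Pi_eq by (simp add: sum_distrib_left sum_divide_distrib algebra_simps)
    finally show ?thesis .
  qed
  have main: "\<bar>eps_gen n D f g eta W1 T\<bar> \<le> sqrt (4 * beta * X) * sqrt (4 * Sig * Pi / (real n)\<^sup>2) + beta * (4 * Sig * Pi / (real n)\<^sup>2)"
  proof -
    have "(\<integral>x. ax x * dl x \<partial>P) + beta * (\<integral>x. (dl x)\<^sup>2 \<partial>P)
        \<le> sqrt (4 * beta * X) * sqrt (4 * Sig * Pi / (real n)\<^sup>2) + beta * (4 * Sig * Pi / (real n)\<^sup>2)"
    proof (rule add_mono)
      show "(\<integral>x. ax x * dl x \<partial>P) \<le> sqrt (4 * beta * X) * sqrt (4 * Sig * Pi / (real n)\<^sup>2)"
      proof -
        have "sqrt (\<integral>x. (ax x)\<^sup>2 \<partial>P) * sqrt (\<integral>x. (dl x)\<^sup>2 \<partial>P) \<le> sqrt (4 * beta * X) * sqrt (4 * Sig * Pi / (real n)\<^sup>2)"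
          using X0 beta by (intro mult_mono real_sqrt_le_mono Ea2 Ed2) auto
        then show ?thesis using cs by linarith
      qed
      show "beta * (\<integral>x. (dl x)\<^sup>2 \<partial>P) \<le> beta * (4 * Sig * Pi / (real n)\<^sup>2)"
        using Ed2 beta by (intro mult_left_mono) auto
    qed
    then show ?thesis using up lo by linarith
  qed
  have "sqrt (4 * beta * X) * sqrt (4 * Sig * Pi / (real n)\<^sup>2) = 4 * sqrt (beta * X * Pi) / real n * sqrt Sig"
  proof -
    have s4: "sqrt (4 * y) = 2 * sqrt y" for y :: real
      using real_sqrt_mult[of 4 y] by (simp add: real_sqrt_mult)
    have sn: "sqrt ((real n)\<^sup>2) = real n" using npos by simp
    have "sqrt (4 * beta * X) * sqrt (4 * Sig * Pi / (real n)\<^sup>2)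
        = (2 * sqrt (beta * X)) * (2 * (sqrt Sig * sqrt Pi) / real n)"
      unfolding real_sqrt_divide sn mult.assoc s4 real_sqrt_mult by simp
    also have "\<dots> = 4 * (sqrt beta * sqrt X * sqrt Pi) / real n * sqrt Sig"
      by (simp add: real_sqrt_mult algebra_simps)
    also have "\<dots> = 4 * sqrt (beta * X * Pi) / real n * sqrt Sig"
      by (simp add: real_sqrt_mult)
    finally show ?thesis .
  qed
  also have "\<dots> \<le> 4 * sqrt (2 * beta * X * Pi) / real n * sqrt Sig"
    using npos beta X0 Pi0 Sig0 by (intro mult_right_mono divide_right_mono mult_left_mono real_sqrt_le_mono) (auto intro: mult_nonneg_nonneg)
  finally have t1: "sqrt (4 * beta * X) * sqrt (4 * Sig * Pi / (real n)\<^sup>2) \<le> 4 * sqrt (2 * beta * X * Pi) / real n * sqrt Sig" .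
  have t2: "beta * (4 * Sig * Pi / (real n)\<^sup>2) \<le> 8 * beta * Pi / (real n)\<^sup>2 * Sig"
  proof -
    have h: "0 \<le> beta * Sig * Pi / (real n)\<^sup>2" using beta Sig0 Pi0 by (intro divide_nonneg_nonneg mult_nonneg_nonneg) auto
    have e1: "beta * (4 * Sig * Pi / (real n)\<^sup>2) = 4 * (beta * Sig * Pi / (real n)\<^sup>2)" by simp
    have e2: "8 * beta * Pi / (real n)\<^sup>2 * Sig = 8 * (beta * Sig * Pi / (real n)\<^sup>2)" by simp
    show ?thesis unfolding e1 e2 using mult_right_mono[OF _ h, of 4 8] by simp
  qed
  show ?thesis using main t1 t2 unfolding X_eq' Pi_def[symmetric] Sig_def[symmetric] by linarith
qed


end
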